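(* For every $\alpha\ge1$ there exist reals $0<v_1<\dots<v_n$ and a distribution $\mathcal{D}$ on $\{v_1,\dots,v_n\}$ with full support such that no buyer-optimal signaling scheme for $\mathcal{D}$ is $\alpha$-majorized.
   Context: Values and prior. $v_0:=0$, $f_{\mathcal{D}}$ is the mass function of $\mathcal{D}$, $F_{\mathcal{D}}$ its CDF, and $G_S(p)=\Pr_{v\sim S}[v\ge p]$. Signals and pricing. A signal is a distribution $S$ on $\{v_1,\dots,v_n\}$. The seller posts $p^*_S$, the smallest $v$ in the support of $S$ maximizing $v\,G_S(v)$. The surplus of value $v$ is $cs_v(S)=\mathbb{1}[v\ge p^*_S](v-p^*_S)$. Signaling schemes. A signaling scheme is $\mathcal{Z}=\{(S_q,\gamma_q)\}$ with $\gamma_q\ge0$, $\sum\gamma_q=1$ and $\sum_q\gamma_q f_{S_q}=f_{\mathcal{D}}$. Its expected consumer surplus at $v_i$ is $cs_{v_i}(\mathcal{Z})=\sum_q cs_{v_i}(S_q)\gamma_q f_{S_q}(v_i)/f_{\mathcal{D}}(v_i)$. $\mathcal{Z}$ is buyer-optimal if $\sum_i f_{\mathcal{D}}(v_i)cs_{v_i}(\mathcal{Z})=\sum_i f_{\mathcal{D}}(v_i)v_i-\max_p p\,G_{\mathcal{D}}(p)$. Majorization. The surplus-mass function $s_{\mathcal{Z}}$ on $(0,1]$ equals $cs_{v_i}(\mathcal{Z})$ on $(F_{\mathcal{D}}(v_{i-1}),F_{\mathcal{D}}(v_i)]$. For a finite step function $f$ on $(0,1]$, $\mathrm{Pf}(f,m)=\int_0^m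 f_{\mathrm{sorted}}$, where $f_{\mathrm{sorted}}$ rearranges the steps of $f$ in ascending order. $\mathcal{Z}$ is $\alpha$-majorized if $\alpha\,\mathrm{Pf}(s_{\mathcal{Z}},m)\ge\mathrm{Pf}(s_{\mathcal{Z}'},m)$ for every signaling scheme $\mathcal{Z}'$ for $\mathcal{D}$ and every $m\in(0,1]$. *)

theory Defs
  imports Complex_Main
begin

text \<open>Values are v 1 < ... < v n (indexed by 1..n); a distribution on these values
is represented by its mass function on the indices 1..n.\<close>

definition valid_values :: "nat \<Rightarrow> (nat \<Rightarrow> real) \<Rightarrow> bool" where
  "valid_values n v \<longleftrightarrow> (\<forall>i\<in>{1..n}. 0 < v i) \<and> (\<forall>i\<in>{1..n}. \<forall>j\<in>{1..n}. i < j \<longrightarrow> v i < v j)"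

definition is_dist :: "nat \<Rightarrow> (nat \<Rightarrow> real) \<Rightarrow> bool" where
  "is_dist n f \<longleftrightarrow> (\<forall>i. f i \<ge> 0) \<and> (\<forall>i. i \<notin> {1..n} \<longrightarrow> f i = 0) \<and> (\<Sum>i\<in>{1..n}. f i) = 1"

definition full_support :: "nat \<Rightarrow> (nat \<Rightarrow> real) \<Rightarrow> bool" where
  "full_support n f \<longleftrightarrow> (\<forall>i\<in>{1..n}. f i > 0)"

definition G :: "nat \<Rightarrow> (nat \<Rightarrow> real) \<Rightarrow> (nat \<Rightarrow> real) \<Rightarrow> real \<Rightarrow> real" where
  "G n v S p = (\<Sum>j\<in>{1..n}. if p \<le> v j then S j else 0)"

definition price :: "nat \<Rightarrow> (nat \<Rightarrow> real) \<Rightarrow> (nat \<Rightarrow> real) \<Rightarrow> real" where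
  "price n v S = Min {v i | i. i \<in> {1..n} \<and> S i > 0 \<and>
       (\<forall>j\<in>{1..n}. S j > 0 \<longrightarrow> v j * G n v S (v j) \<le> v i * G n v S (v i))}"

definition cs :: "nat \<Rightarrow> (nat \<Rightarrow> real) \<Rightarrow> (nat \<Rightarrow> real) \<Rightarrow> real \<Rightarrow> real" where
  "cs n v S x = (if x \<ge> price n v S then x - price n v S else 0)"

type_synonym scheme = "((nat \<Rightarrow> real) \<times> real) list"

definition is_scheme :: "nat \<Rightarrow> (nat \<Rightarrow> real) \<Rightarrow> scheme \<Rightarrow> bool" where
  "is_scheme n fD Z \<longleftrightarrow>
     (\<forall>(S, \<gamma>) \<in> set Z. is_dist n S \<and> \<gamma> \<ge> 0) \<and>
     (\<Sum>(S, \<gamma>) \<leftarrow> Z. \<gamma>) = 1 \<and>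
     (\<forall>i. (\<Sum>(S, \<gamma>) \<leftarrow> Z. \<gamma> * S i) = fD i)"

definition cs_scheme :: "nat \<Rightarrow> (nat \<Rightarrow> real) \<Rightarrow> (nat \<Rightarrow> real) \<Rightarrow> scheme \<Rightarrow> nat \<Rightarrow> real" where
  "cs_scheme n v fD Z i = (\<Sum>(S, \<gamma>) \<leftarrow> Z. cs n v S (v i) * \<gamma> * S i / fD i)"

definition buyer_optimal :: "nat \<Rightarrow> (nat \<Rightarrow> real) \<Rightarrow> (nat \<Rightarrow> real) \<Rightarrow> scheme \<Rightarrow> bool" where
  "buyer_optimal n v fD Z \<longleftrightarrow>
     (\<Sum>i\<in>{1..n}. fD i * cs_scheme n v fD Z i) =
     (\<Sum>i\<in>{1..n}. fD i * v i) - (SUP p::real. p * G n v fD p)"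

text \<open>A finite step function on (0,1] given as the list of its steps (height, width),
  listed left to right. The surplus-mass function s_Z has the step of height
  cs_{v_i}(Z) on (F(v_{i-1}), F(v_i)], whose width is f_D(v_i).\<close>
definition surplus_steps :: "nat \<Rightarrow> (nat \<Rightarrow> real) \<Rightarrow> (nat \<Rightarrow> real) \<Rightarrow> scheme \<Rightarrow> (real \<times> real) list" where
  "surplus_steps n v fD Z = map (\<lambda>i. (cs_scheme n v fD Z i, fD i)) [1..<Suc n]"

fun step_integral :: "(real \<times> real) list \<Rightarrow> real \<Rightarrow> real" where
  "step_integral [] m = 0"
| "step_integral ((h, w) # rest) m = h * min w (max m 0) + step_integral rest (m - w)"

definition Pf :: "(real \<times> real) list \<Rightarrow> real \<Rightarrow> real" where
  "Pf steps m = step_integral (sort_key fst steps) m"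

definition majorized :: "real \<Rightarrow> nat \<Rightarrow> (nat \<Rightarrow> real) \<Rightarrow> (nat \<Rightarrow> real) \<Rightarrow> scheme \<Rightarrow> bool" where
  "majorized \<alpha> n v fD Z \<longleftrightarrow>
     (\<forall>Z'. is_scheme n fD Z' \<longrightarrow> (\<forall>m. 0 < m \<and> m \<le> 1 \<longrightarrow>
        \<alpha> * Pf (surplus_steps n v fD Z) m \<ge> Pf (surplus_steps n v fD Z') m))"

end

theory Submission
  imports Defs
begin

lemma sum3: "(\<Sum>i\<in>{1..3::nat}. f i) = f 1 + f 2 + (f 3::real)"
proof -
  have "{1..3::nat} = {1,2,3}" by auto
  then show ?thesis by simp
qed

lemma price_ex:
  assumes "is_dist n S"
  shows "\<exists>k\<in>{1..n}. S k > 0 \<and> price n v S = v k \<and>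
     (\<forall>j\<in>{1..n}. S j > 0 \<longrightarrow> v j * G n v S (v j) \<le> v k * G n v S (v k))"
proof -
  define P where "P = {i\<in>{1..n}. S i > 0}"
  have fP: "finite P" unfolding P_def by auto
  have neP: "P \<noteq> {}"
  proof
    assume "P = {}"
    then have "\<forall>i\<in>{1..n}. S i = 0" using assms unfolding P_def is_dist_def
      by (metis (mono_tags, lifting) empty_Collect_eq order_less_le)
    then have "(\<Sum>i\<in>{1..n}. S i) = 0" by simp
    then show False using assms unfolding is_dist_def by simp
  qed
  define h where "h i = v i * G n v S (v i)" for i
  define M where "M = Max (h ` P)"
  have "M \<in> h ` P" unfolding M_def using fP neP by simp
  then obtain k where k: "k \<in> P" "h k = M" by auto
  have kmax: "\<forall>j\<in>P. h j \<le> h k" using k fP unfolding M_def by simp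
  define A where "A = {v i | i. i \<in> {1..n} \<and> S i > 0 \<and>
       (\<forall>j\<in>{1..n}. S j > 0 \<longrightarrow> v j * G n v S (v j) \<le> v i * G n v S (v i))}"
  have "A \<subseteq> v ` {1..n}" unfolding A_def by auto
  then have fA: "finite A" using finite_surj by blast
  have "v k \<in> A" unfolding A_def using k kmax unfolding P_def h_def by auto
  then have "A \<noteq> {}" by auto
  then have "Min A \<in> A" using fA by simp
  then obtain i where "i \<in> {1..n}" "S i > 0" "Min A = v i"
     "\<forall>j\<in>{1..n}. S j > 0 \<longrightarrow> v j * G n v S (v j) \<le> v i * G n v S (v i)"
    unfolding A_def by auto
  then show ?thesis unfolding price_def A_def[symmetric] by auto
qed

lemma price_eqI:
  assumes "k\<in>{1..n}" "S k > 0"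
    "\<forall>j\<in>{1..n}. S j > 0 \<longrightarrow> v j * G n v S (v j) \<le> v k * G n v S (v k)"
    "\<forall>i\<in>{1..n}. S i > 0 \<longrightarrow> v k \<le> v i"
  shows "price n v S = v k"
proof -
  define A where "A = {v i | i. i \<in> {1..n} \<and> S i > 0 \<and>
       (\<forall>j\<in>{1..n}. S j > 0 \<longrightarrow> v j * G n v S (v j) \<le> v i * G n v S (v i))}"
  have "A \<subseteq> v ` {1..n}" unfolding A_def by auto
  then have fA: "finite A" using finite_surj by blast
  have "v k \<in> A" unfolding A_def using assms by auto
  moreover have "\<forall>x\<in>A. v k \<le> x" unfolding A_def using assms by auto
  ultimately have "Min A = v k" using fA by (intro Min_eqI) auto
  then show ?thesis unfolding price_def A_def[symmetric] .
qed

lemma swap_sum: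
  "(\<Sum>i\<in>A. (\<Sum>(S,\<gamma>)\<leftarrow>Z. g i S \<gamma>)) = (\<Sum>(S,\<gamma>)\<leftarrow>Z. \<Sum>i\<in>A. (g i S \<gamma> :: real))"
  by (induction Z) (auto simp: sum.distrib)

lemma cs_scheme_mult:
  assumes "fD i \<noteq> 0"
  shows "fD i * cs_scheme n v fD Z i = (\<Sum>(S,\<gamma>)\<leftarrow>Z. \<gamma> * (S i * cs n v S (v i)))"
  unfolding cs_scheme_def using assms
  by (induction Z) (auto simp: field_simps distrib_left)

definition vv :: "real \<Rightarrow> nat \<Rightarrow> real" where "vv t i = 1 + t * (real i - 1)"

lemma vv_vals: "vv t 1 = 1" "vv t (Suc 0) = 1" "vv t 2 = 1 + t" "vv t 3 = 1 + 2*t"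
  by (simp_all add: vv_def)

lemma G3: "G 3 v S p = (if p \<le> v 1 then S 1 else 0) + (if p \<le> v 2 then S 2 else 0) + (if p \<le> v 3 then S 3 else 0)"
  unfolding G_def sum3 by simp

lemma dist3: assumes "is_dist 3 S" shows "S 1 \<ge> 0" "S 2 \<ge> 0" "S 3 \<ge> 0" "S 1 + S 2 + S 3 = 1"
  using assms unfolding is_dist_def sum3 by auto

lemma sig:
  assumes t: "0 < t" and S: "is_dist 3 S"
  shows "cs 3 (vv t) S 1 = 0"
    "(\<Sum>i\<in>{1..3}. S i * cs 3 (vv t) S (vv t i)) \<le> (\<Sum>i\<in>{1..3}. S i * vv t i) - vv t 3 * S 3"
    "(\<Sum>i\<in>{1..3}. S i * cs 3 (vv t) S (vv t i)) = (\<Sum>i\<in>{1..3}. S i * vv t i) - vv t 3 * S 3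
      \<Longrightarrow> S 2 * cs 3 (vv t) S (vv t 2) \<le> t / (1 + 2*t) * S 1"
proof -
  note d = dist3[OF S]
  have G1: "G 3 (vv t) S (vv t 1) = 1" using t d by (simp add: G3 vv_vals)
  have G2: "G 3 (vv t) S (vv t 2) = S 2 + S 3" using t d by (simp add: G3 vv_vals)
  have G3': "G 3 (vv t) S (vv t 3) = S 3" using t d by (simp add: G3 vv_vals)
  obtain k where k: "k \<in> {1..3}" "S k > 0" "price 3 (vv t) S = vv t k"
    "\<forall>j\<in>{1..3}. S j > 0 \<longrightarrow> vv t j * G 3 (vv t) S (vv t j) \<le> vv t k * G 3 (vv t) S (vv t k)"
    using price_ex[OF S] by blast
  have k3: "k = 1 \<or> k = 2 \<or> k = 3" using k(1) by auto
  have "cs 3 (vv t) S 1 = 0 \<and>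
    (\<Sum>i\<in>{1..3}. S i * cs 3 (vv t) S (vv t i)) \<le> (\<Sum>i\<in>{1..3}. S i * vv t i) - vv t 3 * S 3 \<and>
    ((\<Sum>i\<in>{1..3}. S i * cs 3 (vv t) S (vv t i)) = (\<Sum>i\<in>{1..3}. S i * vv t i) - vv t 3 * S 3
      \<longrightarrow> S 2 * cs 3 (vv t) S (vv t 2) \<le> t / (1 + 2*t) * S 1)"
  proof -
    { assume "k = 1"
      then have p: "price 3 (vv t) S = 1" using k by (simp add: vv_vals)
      have m3: "(1 + 2*t) * S 3 \<le> 1"
      proof (cases "S 3 > 0")
        case True then show ?thesis using k(4) \<open>k = 1\<close> G1 G3' by (auto simp: vv_vals)
      next
        case False then show ?thesis using d by auto
      qed
      have cs: "cs 3 (vv t) S 1 = 0" "cs 3 (vv t) S (1+t) = t" "cs 3 (vv t) S (1+2*t) = 2*t"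
        using p t by (auto simp: cs_def vv_vals)
      have L: "(\<Sum>i\<in>{1..3}. S i * cs 3 (vv t) S (vv t i)) = S 2 * t + S 3 * (2*t)"
        unfolding sum3 by (simp add: cs vv_vals)
      have R: "(\<Sum>i\<in>{1..3}. S i * vv t i) - vv t 3 * S 3 = S 1 + S 2 * (1+t)"
        unfolding sum3 by (simp add: vv_vals algebra_simps)
      have eqc: "S 2 * t \<le> t / (1 + 2*t) * S 1" if eq: "S 2 * t + S 3 * (2*t) = S 1 + S 2 * (1+t)"
      proof (cases "S 2 > 0")
        case True
        then have m2: "(1+t) * (S 2 + S 3) \<le> 1" using k(4) \<open>k = 1\<close> G1 G2 by (auto simp: vv_vals)
        have s3: "(1 + 2*t) * S 3 = 1" using eq d(4) by (simp add: algebra_simps)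
        have e1: "(1+2*t)*((1+t)*(S 2+S 3)) = (1+t)*(1+2*t)*S 2 + (1+t)*((1+2*t)*S 3)"
          by (simp add: algebra_simps)
        have A: "(1+2*t)*((1+t)*(S 2+S 3)) \<le> (1+2*t)"
          using m2 t mult_left_mono[of "(1+t)*(S 2+S 3)" 1 "1+2*t"] by auto
        have B: "(1+t)*((1+2*t)*S 3) = 1+t" using s3 by simp
        have "(1+t)*(1+2*t)*S 2 = (1+2*t)*((1+t)*(S 2+S 3)) - (1+t)*((1+2*t)*S 3)"
          by (simp add: algebra_simps)
        also have "\<dots> \<le> (1+2*t) - (1+t)" using A B by linarith
        finally have b: "(1+t)*(1+2*t)*S 2 \<le> t" by simp
        have e2: "(1+2*t)*(S 2 * (1+2*t)) + (1+2*t)*S 2 = 2 * ((1+t)*(1+2*t)*S 2)"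
          by (simp add: algebra_simps)
        have e3: "(1+2*t)*S 1 = (1+2*t) - (1+2*t)*S 2 - (1+2*t)*S 3"
        proof -
          have "(1+2*t)*(S 1 + S 2 + S 3 - 1) = 0" using d(4) by simp
          then show ?thesis by (simp add: algebra_simps)
        qed
        have "(1+2*t)*(S 2 * (1+2*t)) \<le> (1+2*t)*S 1"
          using b e2 e3 s3 by linarith
        then have "S 2 * (1 + 2*t) \<le> S 1" using t by (simp add: mult_le_cancel_left_pos)
        then have "t/(1+2*t) * (S 2 * (1+2*t)) \<le> t/(1+2*t) * S 1"
          using t by (intro mult_left_mono) auto
        moreover have "t/(1+2*t) * (S 2 * (1+2*t)) = S 2 * t" using t by (simp add: field_simps)
        ultimately show ?thesis by simp
      next
        case False then show ?thesis using d t by auto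
      qed
      have ?thesis using cs L R eqc m3 d t by (simp add: algebra_simps vv_vals)
    }
    moreover
    { assume "k = 2"
      then have p: "price 3 (vv t) S = 1 + t" using k by (simp add: vv_vals)
      have m3: "(1 + 2*t) * S 3 \<le> (1+t) * (S 2 + S 3)"
      proof (cases "S 3 > 0")
        case True then show ?thesis using k(4) \<open>k = 2\<close> G2 G3' by (auto simp: vv_vals)
      next
        case False then show ?thesis using d t by auto
      qed
      have cs: "cs 3 (vv t) S 1 = 0" "cs 3 (vv t) S (1+t) = 0" "cs 3 (vv t) S (1+2*t) = t"
        using p t by (auto simp: cs_def vv_vals)
      have ?thesis using cs m3 d t unfolding sum3 by (simp add: vv_vals algebra_simps)
    }
    moreover
    { assume "k = 3"
      then have p: "price 3 (vv t) S = 1 + 2*t" using k by (simp add: vv_vals)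
      have cs: "cs 3 (vv t) S 1 = 0" "cs 3 (vv t) S (1+t) = 0" "cs 3 (vv t) S (1+2*t) = 0"
        using p t by (auto simp: cs_def vv_vals)
      have ?thesis using cs d t unfolding sum3 by (simp add: vv_vals algebra_simps)
    }
    ultimately show ?thesis using k3 by blast
  qed
  then show "cs 3 (vv t) S 1 = 0"
    "(\<Sum>i\<in>{1..3}. S i * cs 3 (vv t) S (vv t i)) \<le> (\<Sum>i\<in>{1..3}. S i * vv t i) - vv t 3 * S 3"
    "(\<Sum>i\<in>{1..3}. S i * cs 3 (vv t) S (vv t i)) = (\<Sum>i\<in>{1..3}. S i * vv t i) - vv t 3 * S 3
      \<Longrightarrow> S 2 * cs 3 (vv t) S (vv t 2) \<le> t / (1 + 2*t) * S 1" by auto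
qed


lemma pl_diff: "(\<Sum>(S,\<gamma>)\<leftarrow>Z. f S \<gamma> - g S \<gamma>) = (\<Sum>(S,\<gamma>)\<leftarrow>Z. f S \<gamma>) - (\<Sum>(S,\<gamma>)\<leftarrow>Z. (g S \<gamma> :: real))"
  by (induction Z) auto

lemma pl_cmult: "(\<Sum>(S,\<gamma>)\<leftarrow>Z. c * f S \<gamma>) = c * (\<Sum>(S,\<gamma>)\<leftarrow>Z. (f S \<gamma> :: real))"
  by (induction Z) (auto simp: distrib_left)

lemma pl_mono:
  assumes "\<And>S \<gamma>. (S,\<gamma>) \<in> set Z \<Longrightarrow> f S \<gamma> \<le> (g S \<gamma>::real)"
  shows "(\<Sum>(S,\<gamma>)\<leftarrow>Z. f S \<gamma>) \<le> (\<Sum>(S,\<gamma>)\<leftarrow>Z. g S \<gamma>)"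
  using assms by (induction Z) (auto intro: add_mono)

lemma pl_nonneg:
  assumes "\<And>S \<gamma>. (S,\<gamma>) \<in> set Z \<Longrightarrow> f S \<gamma> \<ge> (0::real)"
  shows "(\<Sum>(S,\<gamma>)\<leftarrow>Z. f S \<gamma>) \<ge> 0"
  using assms by (induction Z) auto

lemma pl_zero_aux:
  "(\<forall>(S,\<gamma>)\<in>set Z. f S \<gamma> \<ge> (0::real)) \<longrightarrow> (\<Sum>(S,\<gamma>)\<leftarrow>Z. f S \<gamma>) = 0 \<longrightarrow> (\<forall>(S,\<gamma>)\<in>set Z. f S \<gamma> = 0)"
proof (induction Z)
  case Nil then show ?case by simp
next
  case (Cons p Z)
  obtain S0 g0 where p: "p = (S0, g0)" by (cases p)
  show ?case
  proof (intro impI)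
    assume a: "\<forall>(S,\<gamma>)\<in>set (p # Z). f S \<gamma> \<ge> 0" "(\<Sum>(S,\<gamma>)\<leftarrow>p # Z. f S \<gamma>) = 0"
    have n1: "f S0 g0 \<ge> 0" using a(1) p by auto
    have n2: "(\<Sum>(S,\<gamma>)\<leftarrow>Z. f S \<gamma>) \<ge> 0" using a(1) by (intro pl_nonneg) auto
    have s: "f S0 g0 + (\<Sum>(S,\<gamma>)\<leftarrow>Z. f S \<gamma>) = 0" using a(2) p by simp
    then have "f S0 g0 = 0" "(\<Sum>(S,\<gamma>)\<leftarrow>Z. f S \<gamma>) = 0" using n1 n2 by linarith+
    then show "\<forall>(S,\<gamma>)\<in>set (p # Z). f S \<gamma> = 0" using Cons.IH a(1) p by auto
  qed
qed

lemma pl_zero: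
  assumes "\<And>S \<gamma>. (S,\<gamma>) \<in> set Z \<Longrightarrow> f S \<gamma> \<ge> (0::real)" "(\<Sum>(S,\<gamma>)\<leftarrow>Z. f S \<gamma>) = 0"
    "(S,\<gamma>) \<in> set Z"
  shows "f S \<gamma> = 0"
  using pl_zero_aux[of Z f] assms by auto

definition WW :: "real \<Rightarrow> real" where "WW t = t^2 + 2*t + 4"
definition fd :: "real \<Rightarrow> nat \<Rightarrow> real" where
  "fd t i = (if i = 1 then t^2 / WW t else if i = 2 then 2*t / WW t else if i = 3 then 4 / WW t else 0)"

lemma WW_pos: "0 < t \<Longrightarrow> 0 < WW t" unfolding WW_def by (simp add: add_pos_pos)

lemma fd_vals: "fd t 1 = t^2 / WW t" "fd t (Suc 0) = t^2 / WW t" "fd t 2 = 2*t / WW t" "fd t 3 = 4 / WW t"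
  by (simp_all add: fd_def)

lemma fd_pos: "0 < t \<Longrightarrow> i \<in> {1..3} \<Longrightarrow> fd t i > 0"
  using WW_pos[of t] by (auto simp: fd_def)

lemma fd_dist: "0 < t \<Longrightarrow> is_dist 3 (fd t)"
proof -
  assume t: "0 < t"
  have "t^2/WW t + 2*t/WW t + 4/WW t = WW t / WW t" by (simp only: add_divide_distrib[symmetric] WW_def)
  also have "\<dots> = 1" using WW_pos[OF t] by simp
  finally have "fd t 1 + fd t 2 + fd t 3 = 1" by (simp add: fd_vals)
  then show ?thesis unfolding is_dist_def sum3 using WW_pos[OF t] t by (auto simp: fd_def)
qed

lemma sup_fd:
  assumes t: "0 < t" "t \<le> 1/4"
  shows "(SUP p. p * G 3 (vv t) (fd t) p) = (1+2*t) * fd t 3"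
proof -
  have W: "0 < WW t" using WW_pos t by simp
  have R1: "1 \<le> (1+2*t) * fd t 3"
    using t W by (simp add: fd_vals field_simps WW_def power2_eq_square)
  have R2: "(1+t) * (fd t 2 + fd t 3) \<le> (1+2*t) * fd t 3"
  proof -
    have "t * t \<le> t * 1" using t by (intro mult_left_mono) auto
    then have "(1+t) * (2*t + 4) \<le> (1+2*t) * 4" by (simp add: algebra_simps)
    then have "(1+t) * (2*t + 4) / WW t \<le> (1+2*t) * 4 / WW t" using W by (intro divide_right_mono) auto
    moreover have "(1+t) * (fd t 2 + fd t 3) = (1+t) * (2*t + 4) / WW t" by (simp add: fd_vals add_divide_distrib[symmetric])
    moreover have "(1+2*t) * fd t 3 = (1+2*t) * 4 / WW t" by (simp add: fd_vals)
    ultimately show ?thesis by simp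
  qed
  have f: "fd t 1 + fd t 2 + fd t 3 = 1" "fd t 2 \<ge> 0" "fd t 3 \<ge> 0"
    using dist3[OF fd_dist[OF t(1)]] by auto
  have bound: "p * G 3 (vv t) (fd t) p \<le> (1+2*t) * fd t 3" for p
  proof -
    consider "p \<le> 1" | "1 < p" "p \<le> 1 + t" | "1 + t < p" "p \<le> 1 + 2*t" | "1 + 2*t < p" by linarith
    then show ?thesis
    proof cases
      case 1 then show ?thesis using t f R1 by (simp add: G3 vv_vals)
    next
      case 2
      then have "p * (fd t 2 + fd t 3) \<le> (1+t) * (fd t 2 + fd t 3)" using f by (intro mult_right_mono) auto
      then show ?thesis using 2 t R2 by (simp add: G3 vv_vals)
    next
      case 3
      then have "p * fd t 3 \<le> (1+2*t) * fd t 3" using f by (intro mult_right_mono) auto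
      then show ?thesis using 3 t by (simp add: G3 vv_vals)
    next
      case 4 then show ?thesis using t f R1 by (simp add: G3 vv_vals)
    qed
  qed
  have att: "(1+2*t) * G 3 (vv t) (fd t) (1+2*t) = (1+2*t) * fd t 3"
    using t by (simp add: G3 vv_vals)
  show ?thesis
    by (rule cSup_eq_maximum) (use bound att in \<open>auto intro: range_eqI[of _ _ "1+2*t"]\<close>)
qed


lemma agg: "(\<Sum>i\<in>A. (\<Sum>(S,\<gamma>)\<leftarrow>Z. \<gamma> * S i) * w i) - c * (\<Sum>(S,\<gamma>)\<leftarrow>Z. \<gamma> * S k)
   = (\<Sum>(S,\<gamma>)\<leftarrow>Z. \<gamma> * ((\<Sum>i\<in>A. S i * w i) - c * (S k :: real)))"
  by (induction Z) (auto simp: algebra_simps sum.distrib sum_distrib_left)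

lemma BO:
  assumes t: "0 < t" "t \<le> 1/4" and Z: "is_scheme 3 (fd t) Z" and B: "buyer_optimal 3 (vv t) (fd t) Z"
  shows "cs_scheme 3 (vv t) (fd t) Z 1 = 0"
    "fd t 2 * cs_scheme 3 (vv t) (fd t) Z 2 \<le> t/(1+2*t) * fd t 1"
    "\<forall>i\<in>{1..3}. cs_scheme 3 (vv t) (fd t) Z i \<ge> 0"
proof -
  define L where "L S = (\<Sum>i\<in>{1..3}. S i * cs 3 (vv t) S (vv t i))" for S
  define R where "R S = (\<Sum>i\<in>{1..3}. S i * vv t i) - vv t 3 * S 3" for S :: "nat \<Rightarrow> real"
  have dZ: "\<And>S \<gamma>. (S,\<gamma>) \<in> set Z \<Longrightarrow> is_dist 3 S \<and> \<gamma> \<ge> 0" using Z unfolding is_scheme_def by auto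
  have fs: "\<And>i. (\<Sum>(S,\<gamma>)\<leftarrow>Z. \<gamma> * S i) = fd t i" using Z unfolding is_scheme_def by auto
  have mult: "fd t i * cs_scheme 3 (vv t) (fd t) Z i = (\<Sum>(S,\<gamma>)\<leftarrow>Z. \<gamma> * (S i * cs 3 (vv t) S (vv t i)))"
    if "i \<in> {1..3}" for i
    using fd_pos[OF t(1) that] by (intro cs_scheme_mult) simp
  have LHS: "(\<Sum>i\<in>{1..3}. fd t i * cs_scheme 3 (vv t) (fd t) Z i) = (\<Sum>(S,\<gamma>)\<leftarrow>Z. \<gamma> * L S)"
  proof -
    have "(\<Sum>i\<in>{1..3}. fd t i * cs_scheme 3 (vv t) (fd t) Z i)
       = (\<Sum>i\<in>{1..3}. (\<Sum>(S,\<gamma>)\<leftarrow>Z. \<gamma> * (S i * cs 3 (vv t) S (vv t i))))"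
      using mult by (intro sum.cong) auto
    also have "\<dots> = (\<Sum>(S,\<gamma>)\<leftarrow>Z. \<Sum>i\<in>{1..3}. \<gamma> * (S i * cs 3 (vv t) S (vv t i)))"
      by (rule swap_sum)
    also have "\<dots> = (\<Sum>(S,\<gamma>)\<leftarrow>Z. \<gamma> * L S)"
      unfolding L_def by (simp add: sum_distrib_left)
    finally show ?thesis .
  qed
  have RHS: "(\<Sum>i\<in>{1..3}. fd t i * vv t i) - (SUP p. p * G 3 (vv t) (fd t) p) = (\<Sum>(S,\<gamma>)\<leftarrow>Z. \<gamma> * R S)"
  proof -
    have "(\<Sum>i\<in>{1..3}. fd t i * vv t i) - (SUP p. p * G 3 (vv t) (fd t) p)
       = (\<Sum>i\<in>{1..3}. (\<Sum>(S,\<gamma>)\<leftarrow>Z. \<gamma> * S i) * vv t i) - vv t 3 * (\<Sum>(S,\<gamma>)\<leftarrow>Z. \<gamma> * S 3)"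
      using sup_fd[OF t] by (simp add: fs vv_vals)
    also have "\<dots> = (\<Sum>(S,\<gamma>)\<leftarrow>Z. \<gamma> * R S)" unfolding R_def by (rule agg)
    finally show ?thesis .
  qed
  have eq: "(\<Sum>(S,\<gamma>)\<leftarrow>Z. \<gamma> * R S - \<gamma> * L S) = 0"
    using B LHS RHS unfolding buyer_optimal_def pl_diff by simp
  have LR: "L S \<le> R S" if "(S,\<gamma>) \<in> set Z" for S \<gamma>
    using sig(2)[OF t(1)] dZ[OF that] unfolding L_def R_def by blast
  have zero: "\<gamma> * R S - \<gamma> * L S = 0" if "(S,\<gamma>) \<in> set Z" for S \<gamma>
  proof (rule pl_zero[OF _ eq that])
    fix S' \<gamma>' assume a: "(S',\<gamma>') \<in> set Z"
    show "\<gamma>' * R S' - \<gamma>' * L S' \<ge> 0" using LR[OF a] dZ[OF a]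
      by (simp add: mult_left_mono flip: right_diff_distrib)
  qed
  have "fd t 1 * cs_scheme 3 (vv t) (fd t) Z 1 = 0"
  proof -
    have "fd t 1 * cs_scheme 3 (vv t) (fd t) Z 1 = (\<Sum>(S,\<gamma>)\<leftarrow>Z. \<gamma> * (S 1 * cs 3 (vv t) S (vv t 1)))"
      by (rule mult) simp
    also have "\<dots> = (\<Sum>(S,\<gamma>)\<leftarrow>Z. 0)"
      using sig(1)[OF t(1)] dZ by (intro arg_cong[where f=sum_list] map_cong) (auto simp: vv_vals)
    also have "\<dots> = 0" by (induction Z) auto
    finally show ?thesis .
  qed
  moreover have "fd t 1 > 0" using WW_pos[OF t(1)] t(1) by (simp add: fd_vals)
  ultimately show "cs_scheme 3 (vv t) (fd t) Z 1 = 0" using mult_eq_0_iff by (metis less_irrefl)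
  show "\<forall>i\<in>{1..3}. cs_scheme 3 (vv t) (fd t) Z i \<ge> 0"
  proof
    fix i :: nat assume i: "i \<in> {1..3}"
    have "fd t i * cs_scheme 3 (vv t) (fd t) Z i \<ge> 0"
      unfolding mult[OF i] using dZ
      by (intro pl_nonneg) (auto simp: cs_def is_dist_def)
    then show "cs_scheme 3 (vv t) (fd t) Z i \<ge> 0" using fd_pos[OF t(1) i]
      by (simp add: zero_le_mult_iff)
  qed
  have "fd t 2 * cs_scheme 3 (vv t) (fd t) Z 2 = (\<Sum>(S,\<gamma>)\<leftarrow>Z. \<gamma> * (S 2 * cs 3 (vv t) S (vv t 2)))"
    by (rule mult) simp
  also have "\<dots> \<le> (\<Sum>(S,\<gamma>)\<leftarrow>Z. t/(1+2*t) * (\<gamma> * S 1))"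
  proof (rule pl_mono)
    fix S \<gamma> assume a: "(S,\<gamma>) \<in> set Z"
    show "\<gamma> * (S 2 * cs 3 (vv t) S (vv t 2)) \<le> t/(1+2*t) * (\<gamma> * S 1)"
    proof (cases "\<gamma> = 0")
      case True then show ?thesis by simp
    next
      case False
      then have e: "L S = R S" using zero[OF a] by simp
      have "S 2 * cs 3 (vv t) S (vv t 2) \<le> t / (1 + 2*t) * S 1"
        by (rule sig(3)[OF t(1) conjunct1[OF dZ[OF a]] e[unfolded L_def R_def]])
      then have "\<gamma> * (S 2 * cs 3 (vv t) S (vv t 2)) \<le> \<gamma> * (t / (1 + 2*t) * S 1)"
        using dZ[OF a] by (intro mult_left_mono) auto
      then show ?thesis by (simp add: algebra_simps)
    qed
  qed
  also have "\<dots> = t/(1+2*t) * fd t 1" by (subst pl_cmult) (simp only: fs)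
  finally show "fd t 2 * cs_scheme 3 (vv t) (fd t) Z 2 \<le> t/(1+2*t) * fd t 1" .
qed


lemma Pf3:
  assumes "0 < w1" "w1 \<le> w2" "w1 \<le> w3" "0 \<le> c2" "0 \<le> c3"
  shows "Pf [(0,w1),(c2,w2),(c3,w3)] (2*w1) = w1 * min c2 c3"
  using assms unfolding Pf_def by (cases "c2 \<le> c3") (auto simp: min_def max_def)

lemma upt3: "[1..<Suc 3] = [1,2,3::nat]" by (simp add: numeral_3_eq_3 upt_rec)

lemma steps3: "surplus_steps 3 v fD Z = [(cs_scheme 3 v fD Z 1, fD 1), (cs_scheme 3 v fD Z 2, fD 2), (cs_scheme 3 v fD Z 3, fD 3)]"
  unfolding surplus_steps_def upt3 by simp


lemma set3: "{1..3::nat} = {1,2,3}" by auto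

definition SA :: "real \<Rightarrow> nat \<Rightarrow> real" where
  "SA t i = (if i = 1 then 2*t/(1+2*t) else if i = 2 then 1/(1+2*t) else 0)"
definition SB :: "real \<Rightarrow> nat \<Rightarrow> real" where
  "SB t i = (if i = 2 then 3*t/(2+3*t) else if i = 3 then 2/(2+3*t) else 0)"
definition SC :: "nat \<Rightarrow> real" where
  "SC i = (if i = 3 then 1 else 0)"
definition Zp :: "real \<Rightarrow> scheme" where
  "Zp t = [(SA t, t*(1+2*t)/(2*WW t)), (SB t, (2+3*t)/(2*WW t)), (SC, 3/WW t)]"

lemma SA_vals: "SA t 1 = 2*t/(1+2*t)" "SA t (Suc 0) = 2*t/(1+2*t)" "SA t 2 = 1/(1+2*t)" "SA t 3 = 0"
  by (simp_all add: SA_def)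
lemma SB_vals: "SB t 1 = 0" "SB t (Suc 0) = 0" "SB t 2 = 3*t/(2+3*t)" "SB t 3 = 2/(2+3*t)"
  by (simp_all add: SB_def)
lemma SC_vals: "SC 1 = 0" "SC (Suc 0) = 0" "SC 2 = 0" "SC 3 = 1"
  by (simp_all add: SC_def)

lemma price_SA: assumes t: "0 < t" shows "price 3 (vv t) (SA t) = 1"
proof -
  have "price 3 (vv t) (SA t) = vv t 1"
  proof (rule price_eqI)
    show "\<forall>j\<in>{1..3}. 0 < SA t j \<longrightarrow> vv t j * G 3 (vv t) (SA t) (vv t j) \<le> vv t 1 * G 3 (vv t) (SA t) (vv t 1)"
    proof -
      have "(1+t) * (1/(1+2*t)) \<le> 2*t/(1+2*t) + 1/(1+2*t)" using t by (simp add: field_simps)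
      then show ?thesis using t unfolding set3 by (simp add: G3 vv_vals SA_vals)
    qed
  qed (use t in \<open>auto simp: SA_def vv_def\<close>)
  then show ?thesis by (simp add: vv_vals)
qed

lemma price_SB: assumes t: "0 < t" shows "price 3 (vv t) (SB t) = 1 + t"
proof -
  have "price 3 (vv t) (SB t) = vv t 2"
  proof (rule price_eqI)
    show "\<forall>j\<in>{1..3}. 0 < SB t j \<longrightarrow> vv t j * G 3 (vv t) (SB t) (vv t j) \<le> vv t 2 * G 3 (vv t) (SB t) (vv t 2)"
    proof -
      have q: "0 < 4 + (t * 12 + t * (t * 9))" using t by (simp add: add_pos_pos mult_pos_pos)
      have "(1+2*t) * (2/(2+3*t)) \<le> (1+t) * (3*t/(2+3*t) + 2/(2+3*t))" using t q
        by (simp add: field_simps)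
      then show ?thesis using t unfolding set3 by (simp add: G3 vv_vals SB_vals)
    qed
    show "\<forall>i\<in>{1..3}. 0 < SB t i \<longrightarrow> vv t 2 \<le> vv t i"
      using t unfolding set3 by (simp add: vv_vals SB_vals)
  qed (use t in \<open>auto simp: SB_def\<close>)
  then show ?thesis by (simp add: vv_vals)
qed

lemma price_SC: assumes t: "0 < t" shows "price 3 (vv t) SC = 1 + 2*t"
proof -
  have "price 3 (vv t) SC = vv t 3"
    by (rule price_eqI) (auto simp: SC_def)
  then show ?thesis by (simp add: vv_vals)
qed

lemma m1: "0 < t \<Longrightarrow> 0 < (W::real) \<Longrightarrow> t*(1+2*t)/(2*W) * (2*t/(1+2*t)) + ((2+3*t)/(2*W) * 0 + 3/W * 0) = t^2/W"
proof -
  assume t: "0 < t" and W: "0 < W"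
  have "1 + 2*t \<noteq> 0" using t by simp
  then show ?thesis using W by (simp add: divide_simps power2_eq_square) 
qed
lemma m2: "0 < t \<Longrightarrow> 0 < (W::real) \<Longrightarrow> t*(1+2*t)/(2*W) * (1/(1+2*t)) + ((2+3*t)/(2*W) * (3*t/(2+3*t)) + 3/W * 0) = 2*t/W"
proof -
  assume t: "0 < t" and W: "0 < W"
  have "1 + 2*t \<noteq> 0" "2 + 3*t \<noteq> 0" using t by simp_all
  then show ?thesis using W by (simp add: divide_simps)
qed
lemma m3: "0 < t \<Longrightarrow> 0 < (W::real) \<Longrightarrow> t*(1+2*t)/(2*W) * 0 + ((2+3*t)/(2*W) * (2/(2+3*t)) + 3/W * 1) = 4/W"
proof -
  assume t: "0 < t" and W: "0 < W"
  have "2 + 3*t \<noteq> 0" using t by simp_all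
  then show ?thesis using W by (simp add: divide_simps)
qed

lemma Zp_props:
  assumes t: "0 < t" "t \<le> 1/4"
  shows "is_scheme 3 (fd t) (Zp t)"
    "cs_scheme 3 (vv t) (fd t) (Zp t) 1 = 0"
    "cs_scheme 3 (vv t) (fd t) (Zp t) 2 = t/4"
    "cs_scheme 3 (vv t) (fd t) (Zp t) 3 = t/4"
proof -
  have W: "0 < WW t" using WW_pos t by simp
  have q: "0 < 4 + (t * 12 + t * (t * 9))" using t by (simp add: add_pos_pos mult_pos_pos)
  have q2: "0 < 1 + 2*t" "1 + 2*t \<noteq> 0" "2 + 4*t \<noteq> 0" using t by auto
  have dA: "is_dist 3 (SA t)" unfolding is_dist_def sum3 using t by (auto simp: SA_def field_simps)
  have dB: "is_dist 3 (SB t)" unfolding is_dist_def sum3 using t q by (auto simp: SB_def field_simps)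
  have dC: "is_dist 3 SC" unfolding is_dist_def sum3 by (auto simp: SC_def)
  have gs: "t*(1+2*t)/(2*WW t) + ((2+3*t)/(2*WW t) + 3/WW t) = 1"
  proof -
    have e: "t*(1+2*t) + (2+3*t) + 6 = 2*WW t" by (simp add: WW_def power2_eq_square algebra_simps)
    have "t*(1+2*t)/(2*WW t) + ((2+3*t)/(2*WW t) + 3/WW t) = (t*(1+2*t) + (2+3*t) + 6)/(2*WW t)"
      using W by (simp add: add_divide_distrib)
    also have "\<dots> = 1" unfolding e using W by simp
    finally show ?thesis .
  qed
  have mix: "t*(1+2*t)/(2*WW t) * SA t i + ((2+3*t)/(2*WW t) * SB t i + 3/WW t * SC i) = fd t i" for i
  proof -
    consider "i = 1" | "i = 2" | "i = 3" | "i \<noteq> 1 \<and> i \<noteq> 2 \<and> i \<noteq> 3" by blast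
    then show ?thesis
    proof cases
      case 1 then show ?thesis using m1[OF t(1) W] by (simp only: SA_vals SB_vals SC_vals fd_vals)
    next
      case 2 then show ?thesis using m2[OF t(1) W] by (simp only: SA_vals SB_vals SC_vals fd_vals)
    next
      case 3 then show ?thesis using m3[OF t(1) W] by (simp only: SA_vals SB_vals SC_vals fd_vals)
    next
      case 4 then show ?thesis by (simp add: SA_def SB_def SC_def fd_def)
    qed
  qed
  show "is_scheme 3 (fd t) (Zp t)"
    unfolding is_scheme_def Zp_def using dA dB dC gs mix t W by auto
  have pA: "price 3 (vv t) (SA t) = 1" using price_SA t by simp
  have pB: "price 3 (vv t) (SB t) = 1 + t" using price_SB t by simp
  have pC: "price 3 (vv t) SC = 1 + 2*t" using price_SC t by simp
  show "cs_scheme 3 (vv t) (fd t) (Zp t) 1 = 0"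
    unfolding cs_scheme_def Zp_def using t by (simp add: cs_def pA pB pC SA_vals SB_vals SC_vals vv_vals)
  show "cs_scheme 3 (vv t) (fd t) (Zp t) 2 = t/4"
    unfolding cs_scheme_def Zp_def using t W q by (simp add: cs_def pA pB pC SA_vals SB_vals SC_vals vv_vals fd_vals) (simp add: divide_simps algebra_simps)
  show "cs_scheme 3 (vv t) (fd t) (Zp t) 3 = t/4"
    unfolding cs_scheme_def Zp_def using t W q by (simp add: cs_def pA pB pC SA_vals SB_vals SC_vals vv_vals fd_vals) (simp add: divide_simps algebra_simps)
qed


theorem theorem3:
  fixes \<alpha> :: real
  assumes "\<alpha> \<ge> 1"
  shows "\<exists>n v fD. valid_values n v \<and> is_dist n fD \<and> full_support n fD \<and>
           (\<forall>Z. is_scheme n fD Z \<and> buyer_optimal n v fD Z \<longrightarrow> \<not> majorized \<alpha> n v fD Z)"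
proof -
  define t where "t = 1/(4*\<alpha>)"
  have t: "0 < t" "t \<le> 1/4" using assms by (auto simp: t_def field_simps)
  have at: "\<alpha> * t = 1/4" using assms by (simp add: t_def)
  have W: "0 < WW t" using WW_pos t by simp
  have vv_valid: "valid_values 3 (vv t)"
    unfolding valid_values_def
  proof (intro conjI ballI impI)
    fix i assume "i \<in> {1..3::nat}"
    then have "real i - 1 \<ge> 0" by auto
    then show "0 < vv t i" unfolding vv_def using t by (simp add: add_pos_nonneg)
  next
    fix i j :: nat assume "i < j"
    then have "real i - 1 < real j - 1" by simp
    then show "vv t i < vv t j" unfolding vv_def using t by simp
  qed
  show ?thesis
  proof (intro exI conjI allI impI)
    show "valid_values 3 (vv t)" by (rule vv_valid)
    show "is_dist 3 (fd t)" by (rule fd_dist[OF t(1)])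
    show "full_support 3 (fd t)" unfolding full_support_def using fd_pos[OF t(1)] by auto
    fix Z assume ZB: "is_scheme 3 (fd t) Z \<and> buyer_optimal 3 (vv t) (fd t) Z"
    note bo = BO[OF t conjunct1[OF ZB] conjunct2[OF ZB]]
    note zp = Zp_props[OF t]
    define c2 where "c2 = cs_scheme 3 (vv t) (fd t) Z 2"
    define c3 where "c3 = cs_scheme 3 (vv t) (fd t) Z 3"
    have c2n: "c2 \<ge> 0" and c3n: "c3 \<ge> 0" using bo(3) unfolding c2_def c3_def by auto
    have f1: "0 < fd t 1" "fd t 1 \<le> fd t 2" "fd t 1 \<le> fd t 3"
    proof -
      show "0 < fd t 1" using fd_pos[OF t(1)] by simp
      have "t^2 \<le> 2*t" using t by (simp add: power2_eq_square)
      then show "fd t 1 \<le> fd t 2" using W by (simp add: fd_vals divide_right_mono)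
      have "t^2 \<le> 4" using t mult_mono[of t 1 t 1] by (simp add: power2_eq_square)
      then show "fd t 1 \<le> fd t 3" using W by (simp add: fd_vals divide_right_mono)
    qed
    have PZ: "Pf (surplus_steps 3 (vv t) (fd t) Z) (2 * fd t 1) = fd t 1 * min c2 c3"
      unfolding steps3 bo(1) c2_def[symmetric] c3_def[symmetric]
      by (rule Pf3) (use f1 c2n c3n in auto)
    have PZp: "Pf (surplus_steps 3 (vv t) (fd t) (Zp t)) (2 * fd t 1) = fd t 1 * (t/4)"
      unfolding steps3 zp(2) zp(3) zp(4)
      using Pf3[of "fd t 1" "fd t 2" "fd t 3" "t/4" "t/4"] f1 t by simp
    have c2b: "c2 \<le> t^2/2"
    proof -
      have "t/(1+2*t) \<le> t" using t by (simp add: field_simps)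
      then have "t/(1+2*t) * fd t 1 \<le> t * fd t 1" using f1 by (intro mult_right_mono) auto
      then have "fd t 2 * c2 \<le> t * fd t 1" using bo(2) unfolding c2_def by linarith
      then have "(2*t*c2) / WW t \<le> (t*t^2) / WW t" by (simp add: fd_vals)
      then have "2*t*c2 \<le> t*t^2" using W by (simp add: divide_le_cancel)
      then have "2*t*c2 \<le> 2*t*(t^2/2)" by simp
      then show ?thesis using t by (simp add: mult_le_cancel_left_pos)
    qed
    show "\<not> majorized \<alpha> 3 (vv t) (fd t) Z"
    proof
      assume "majorized \<alpha> 3 (vv t) (fd t) Z"
      moreover have "0 < 2 * fd t 1" "2 * fd t 1 \<le> 1"
      proof -
        show "0 < 2 * fd t 1" using f1 by simp
        have "fd t 1 + fd t 2 + fd t 3 = 1" using dist3[OF fd_dist[OF t(1)]] by simp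
        then show "2 * fd t 1 \<le> 1" using f1 by linarith
      qed
      ultimately have le: "\<alpha> * (fd t 1 * min c2 c3) \<ge> fd t 1 * (t/4)"
        unfolding majorized_def using zp(1) PZ PZp by metis
      have "\<alpha> * (fd t 1 * min c2 c3) \<le> \<alpha> * (fd t 1 * (t^2/2))"
      proof -
        have "min c2 c3 \<le> t^2/2" using c2b by simp
        then have "fd t 1 * min c2 c3 \<le> fd t 1 * (t^2/2)" using f1 by (intro mult_left_mono) auto
        then show ?thesis using mult_left_mono[of _ _ \<alpha>] assms by simp
      qed
      also have "\<dots> = fd t 1 * t * (\<alpha> * t) / 2" by (simp add: power2_eq_square)
      also have "\<dots> = fd t 1 * (t/8)" using at by simp
      also have "\<dots> < fd t 1 * (t/4)" using f1 t by simp
      finally show False using le by simp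
    qed
  qed
qed

end
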